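(* There exists a topologically regular compact connected set $K\subseteq\mathbb{R}^2$ whose interior $\mathring K$ is not Whitney regular but such that $C^1_{\mathrm{int}}(K)=C^1(K)=C^1(\mathbb{R}^2|K)$. (For instance, $K=\overline\Omega$ where $\Omega$ is the open unit disc from which pairwise disjoint small closed balls accumulating exactly at the segment $\{0\}\times[-\tfrac12,\tfrac12]$ are removed.)
   Context: $K$ is topologically regular if it is the closure of its interior $\mathring K$. A set $S$ is Whitney regular if there is $C>0$ such that any two points $x,y\in S$ can be joined by a rectifiable path in $S$ of length at most $C|x-y|$. $C^1_{\mathrm{int}}(K)$ is the set of $f\in C^1(\mathring K)$ such that $f$ and $df$ extend continuously to $K$ (identified with these extensions). $C^1(K)$ is the set of $f:K\to\mathbb{R}$ admitting a continuous $df:K\to\mathbb{R}^2$ with $\lim_{y\to x,\,y\in K\setminus\{x\}}\frac{f(y)-f(x)-\langle df(x),y-x\rangle}{|y-x|}=0$ for all $x\in K$. $C^1(\mathbb{R}^2|K)=\{g|_K:g\in C^1(\mathbb{R}^2)\}$. *)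

theory Defs
  imports "HOL-Analysis.Analysis"
begin

definition topologically_regular :: "(real^2) set \<Rightarrow> bool" where
  "topologically_regular K \<longleftrightarrow> closure (interior K) = K"

definition variation_sums :: "(real \<Rightarrow> real^2) \<Rightarrow> real set" where
  "variation_sums g = {(\<Sum>i<n. norm (g (t (Suc i)) - g (t i))) | t n.
      t 0 = 0 \<and> t n = 1 \<and> (\<forall>i<n. t i \<le> t (Suc i))}"

definition rectifiable_path :: "(real \<Rightarrow> real^2) \<Rightarrow> bool" where
  "rectifiable_path g \<longleftrightarrow> path g \<and> bdd_above (variation_sums g)"

definition path_length :: "(real \<Rightarrow> real^2) \<Rightarrow> real" where
  "path_length g = Sup (variation_sums g)"

definition whitney_regular :: "(real^2) set \<Rightarrow> bool" where
  "whitney_regular S \<longleftrightarrow> (\<exists>C>0. \<forall>x\<in>S. \<forall>y\<in>S. \<exists>g. rectifiable_path g \<and>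
      path_image g \<subseteq> S \<and> pathstart g = x \<and> pathfinish g = y \<and>
      path_length g \<le> C * dist x y)"

text \<open>f (considered on K) belongs to C^1_int(K): f is C^1 on the interior, and f and df
  extend continuously to K (f is identified with its extension).\<close>
definition C1_int :: "(real^2) set \<Rightarrow> (real^2 \<Rightarrow> real) \<Rightarrow> bool" where
  "C1_int K f \<longleftrightarrow> (\<exists>df :: real^2 \<Rightarrow> real^2.
      (\<forall>x\<in>interior K. (f has_derivative (\<lambda>h. df x \<bullet> h)) (at x)) \<and>
      continuous_on K f \<and> continuous_on K df)"

definition C1_on :: "(real^2) set \<Rightarrow> (real^2 \<Rightarrow> real) \<Rightarrow> bool" where
  "C1_on K f \<longleftrightarrow> (\<exists>df :: real^2 \<Rightarrow> real^2. continuous_on K df \<and>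
      (\<forall>x\<in>K. ((\<lambda>y. (f y - f x - df x \<bullet> (y - x)) / norm (y - x)) \<longlongrightarrow> 0)
                (at x within K)))"

definition C1_ext :: "(real^2) set \<Rightarrow> (real^2 \<Rightarrow> real) \<Rightarrow> bool" where
  "C1_ext K f \<longleftrightarrow> (\<exists>g :: real^2 \<Rightarrow> real. \<exists>dg :: real^2 \<Rightarrow> real^2.
      (\<forall>x. (g has_derivative (\<lambda>h. dg x \<bullet> h)) (at x)) \<and> continuous_on UNIV dg \<and>
      (\<forall>x\<in>K. g x = f x))"

end

theory Submission
  imports Defs
begin


lemma inner2: "(x::real^2) \<bullet> y = x$1 * y$1 + x$2 * y$2"
  by (simp add: inner_vec_def sum_2)

lemma normsq2: "norm (x::real^2) ^ 2 = x$1^2 + x$2^2"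
proof -
  have "norm x ^ 2 = x \<bullet> x" by (rule power2_norm_eq_inner)
  also have "\<dots> = x$1^2 + x$2^2" by (simp add: inner2 power2_eq_square)
  finally show ?thesis .
qed

lemma axis_comps[simp]: "(axis 1 a :: real^2)$1 = a" "(axis 1 a :: real^2)$2 = 0"
   "(axis 2 a :: real^2)$1 = 0" "(axis 2 a :: real^2)$2 = a"
  by (auto simp: axis_def)

lemma vec_eq2: "(x::real^2) = y \<longleftrightarrow> x$1 = y$1 \<and> x$2 = y$2"
  by (simp add: vec_eq_iff forall_2)

definition W :: "(real^2) set \<Rightarrow> (real^2 \<Rightarrow> real) \<Rightarrow> (real^2 \<Rightarrow> real^2) \<Rightarrow> bool" where
 "W S f df \<longleftrightarrow> continuous_on S df \<and> (\<forall>x\<in>S. (f has_derivative (\<lambda>h. df x \<bullet> h)) (at x within S))"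

lemma deriv_triv:
  assumes "x \<notin> T" "closed T" "bounded_linear L"
  shows "(f has_derivative L) (at x within T)"
proof -
  have "trivial_limit (at x within T)"
    using assms by (intro not_in_closure_trivial_limitI) simp
  then have "at x within T = bot" by (simp add: trivial_limit_def)
  then show ?thesis using assms(3) by (simp add: has_derivative_def)
qed

lemma deriv_Un:
  assumes "closed S" "closed T" "x \<in> S \<union> T"
    and "x \<in> S \<Longrightarrow> (f has_derivative L) (at x within S)"
    and "x \<in> T \<Longrightarrow> (f has_derivative L) (at x within T)"
    and L: "bounded_linear L"
  shows "(f has_derivative L) (at x within S \<union> T)"
proof -
  have dS: "(f has_derivative L) (at x within S)"
    using assms deriv_triv by blast
  have dT: "(f has_derivative L) (at x within T)"
    using assms deriv_triv by blast
  show ?thesis unfolding has_derivative_within_alt2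
    using dS dT L unfolding has_derivative_within_alt2 by (auto simp: at_within_union eventually_sup)
qed

lemma W_Un:
  assumes "closed S" "closed T" "W S f df" "W T f df"
  shows "W (S \<union> T) f df"
  unfolding W_def
proof
  show "continuous_on (S \<union> T) df"
    using assms by (intro continuous_on_closed_Un) (auto simp: W_def)
  show "\<forall>x\<in>S \<union> T. (f has_derivative (\<lambda>h. df x \<bullet> h)) (at x within S \<union> T)"
    using assms by (auto intro!: deriv_Un bounded_linear_inner_right simp: W_def)
qed

lemma W_subset: "W T f df \<Longrightarrow> S \<subseteq> T \<Longrightarrow> W S f df"
  unfolding W_def by (auto intro: continuous_on_subset has_derivative_subset)

lemma W_cong:
  assumes "W S f df" "\<And>x. x \<in> S \<Longrightarrow> g x = f x" "\<And>x. x \<in> S \<Longrightarrow> dg x = df x"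
  shows "W S g dg"
  unfolding W_def
proof
  show "continuous_on S dg" using assms continuous_on_cong[of S S dg df] by (auto simp: W_def)
  show "\<forall>x\<in>S. (g has_derivative (\<lambda>h. dg x \<bullet> h)) (at x within S)"
  proof
    fix x assume x: "x \<in> S"
    have "(f has_derivative (\<lambda>h. df x \<bullet> h)) (at x within S)" using assms x by (auto simp: W_def)
    then have "(g has_derivative (\<lambda>h. df x \<bullet> h)) (at x within S)"
      by (rule has_derivative_transform_within[where d=1]) (use x assms in auto)
    then show "(g has_derivative (\<lambda>h. dg x \<bullet> h)) (at x within S)" using assms x by simp
  qed
qed

lemma C1_on_W: "C1_on K f \<longleftrightarrow> (\<exists>df. W K f df)"
proof -
  have eq: "\<And>x df. ((\<lambda>y. (f y - f x - df x \<bullet> (y - x)) / norm (y - x)) \<longlongrightarrow> 0) (at x within K)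
     \<longleftrightarrow> (f has_derivative (\<lambda>h. df x \<bullet> h)) (at x within K)"
    by (simp add: has_derivative_within bounded_linear_inner_right divide_inverse algebra_simps)
  show ?thesis unfolding C1_on_def W_def eq by blast
qed

lemma W_UNIV_ext:
  assumes "W UNIV g dg" "\<And>x. x \<in> K \<Longrightarrow> g x = f x"
  shows "C1_ext K f"
  using assms unfolding C1_ext_def W_def by auto

lemma ext_W:
  assumes "C1_ext K f" shows "C1_on K f"
proof -
  obtain g dg where g: "\<And>x. (g has_derivative (\<lambda>h. dg x \<bullet> h)) (at x)" "continuous_on UNIV dg"
    "\<And>x. x \<in> K \<Longrightarrow> g x = f x"
    using assms unfolding C1_ext_def by blast
  have "W UNIV g dg" using g by (simp add: W_def)
  then have "W K g dg" by (rule W_subset) simp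
  then have "W K f dg" by (rule W_cong) (use g in auto)
  then show ?thesis by (auto simp: C1_on_W)
qed



lemma psi1_deriv:
  fixes x :: "real^2" assumes "x \<noteq> 0"
  shows "((\<lambda>x. inverse (x \<bullet> x) *\<^sub>R x) has_derivative
     (\<lambda>v. inverse (x \<bullet> x) *\<^sub>R v - (2 * (x \<bullet> v) / (x \<bullet> x)^2) *\<^sub>R x)) (at x)"
  using assms
  apply (auto intro!: derivative_eq_intros ext)
  apply (simp add: field_simps inner_commute power2_eq_square)
  done

lemma psi2_deriv:
  fixes x :: "real^2" assumes "x \<noteq> 0"
  shows "((\<lambda>x. inverse ((x \<bullet> x)^2) *\<^sub>R x) has_derivative
     (\<lambda>v. inverse ((x \<bullet> x)^2) *\<^sub>R v - (4 * (x \<bullet> v) / (x \<bullet> x)^3) *\<^sub>R x)) (at x)"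
  using assms
  apply (auto intro!: derivative_eq_intros ext)
  apply (simp add: field_simps inner_commute power2_eq_square power3_eq_cube)
  done

lemma kelvin_ext:
  assumes W: "W (cball 0 1) h dh"
  shows "\<exists>g dg. W UNIV g dg \<and> (\<forall>x\<in>cball 0 1. g x = h x)"
proof -
  define T where "T = {x::real^2. 1 \<le> norm x}"
  have cT: "closed T" unfolding T_def by (intro closed_Collect_le continuous_intros)
  define p1 where "p1 = (\<lambda>x::real^2. inverse (x \<bullet> x) *\<^sub>R x)"
  define p2 where "p2 = (\<lambda>x::real^2. inverse ((x \<bullet> x)^2) *\<^sub>R x)"
  define D1 where "D1 = (\<lambda>x::real^2. \<lambda>v. inverse (x \<bullet> x) *\<^sub>R v - (2 * (x \<bullet> v) / (x \<bullet> x)^2) *\<^sub>R x)"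
  define D2 where "D2 = (\<lambda>x::real^2. \<lambda>v. inverse ((x \<bullet> x)^2) *\<^sub>R v - (4 * (x \<bullet> v) / (x \<bullet> x)^3) *\<^sub>R x)"
  define G where "G = (\<lambda>x. 2 * h (p1 x) - h (p2 x))"
  define dG where "dG = (\<lambda>x::real^2. 2 *\<^sub>R (inverse (x \<bullet> x) *\<^sub>R dh (p1 x) - (2 * (dh (p1 x) \<bullet> x) / (x \<bullet> x)^2) *\<^sub>R x)
      - (inverse ((x \<bullet> x)^2) *\<^sub>R dh (p2 x) - (4 * (dh (p2 x) \<bullet> x) / (x \<bullet> x)^3) *\<^sub>R x))"
  have T0: "x \<noteq> 0" if "x \<in> T" for x using that by (auto simp: T_def)
  have Tn: "1 \<le> x \<bullet> x" if "x \<in> T" for x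
    using that unfolding T_def by (simp add: power2_norm_eq_inner[symmetric] one_le_power)
  have p1T: "p1 ` T \<subseteq> cball 0 1"
  proof
    fix y assume "y \<in> p1 ` T"
    then obtain x where x: "x \<in> T" "y = p1 x" by auto
    have "norm y = norm x / (norm x)^2"
      using x by (simp add: p1_def power2_norm_eq_inner[symmetric] divide_inverse)
    also have "\<dots> = 1 / norm x" using T0[OF x(1)] by (simp add: power2_eq_square)
    also have "\<dots> \<le> 1" using x unfolding T_def by (simp add: divide_le_eq_1)
    finally show "y \<in> cball 0 1" by simp
  qed
  have p2T: "p2 ` T \<subseteq> cball 0 1"
  proof
    fix y assume "y \<in> p2 ` T"
    then obtain x where x: "x \<in> T" "y = p2 x" by auto
    have n1: "1 \<le> norm x" using x by (simp add: T_def)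
    have "norm y = norm x / (norm x)^4"
      using x by (simp add: p2_def power2_norm_eq_inner[symmetric] divide_inverse flip: power_mult)
    also have "\<dots> \<le> norm x / norm x"
    proof (rule divide_left_mono)
      show "norm x \<le> norm x ^ 4" using n1 by (simp add: self_le_power)
      show "0 < norm x ^ 4 * norm x" using n1 by (intro mult_pos_pos) auto
    qed simp
    also have "\<dots> \<le> 1" by simp
    finally show "y \<in> cball 0 1" by simp
  qed
  have hd: "\<And>y. y \<in> cball 0 1 \<Longrightarrow> (h has_derivative (\<lambda>v. dh y \<bullet> v)) (at y within cball 0 1)"
    using W by (auto simp: W_def)
  have WG: "W T G dG"
    unfolding W_def
  proof
    have c1: "continuous_on T p1" unfolding p1_def
      by (intro continuous_intros) (use Tn in force)
    have c2: "continuous_on T p2" unfolding p2_def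
      by (intro continuous_intros) (use Tn in force)
    have cd: "continuous_on (cball 0 1) dh" using W by (simp add: W_def)
    have "continuous_on T (\<lambda>x. dh (p1 x))" by (rule continuous_on_compose2[OF cd c1 p1T])
    moreover have "continuous_on T (\<lambda>x. dh (p2 x))" by (rule continuous_on_compose2[OF cd c2 p2T])
    ultimately show "continuous_on T dG" unfolding dG_def
      by (intro continuous_intros) (use Tn in force)+
  next
    show "\<forall>x\<in>T. (G has_derivative (\<lambda>v. dG x \<bullet> v)) (at x within T)"
    proof
      fix x assume x: "x \<in> T"
      have d1: "(p1 has_derivative D1 x) (at x within T)" unfolding p1_def D1_def
        using psi1_deriv[OF T0[OF x]] by (rule has_derivative_at_withinI)
      have d2: "(p2 has_derivative D2 x) (at x within T)" unfolding p2_def D2_def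
        using psi2_deriv[OF T0[OF x]] by (rule has_derivative_at_withinI)
      have e1: "((\<lambda>x. h (p1 x)) has_derivative (\<lambda>v. dh (p1 x) \<bullet> D1 x v)) (at x within T)"
        by (rule has_derivative_in_compose2[OF hd p1T x d1])
      have e2: "((\<lambda>x. h (p2 x)) has_derivative (\<lambda>v. dh (p2 x) \<bullet> D2 x v)) (at x within T)"
        by (rule has_derivative_in_compose2[OF hd p2T x d2])
      have "(G has_derivative (\<lambda>v. 2 * (dh (p1 x) \<bullet> D1 x v) - dh (p2 x) \<bullet> D2 x v)) (at x within T)"
        unfolding G_def by (intro derivative_intros e1 e2)
      moreover have "(\<lambda>v. 2 * (dh (p1 x) \<bullet> D1 x v) - dh (p2 x) \<bullet> D2 x v) = (\<lambda>v. dG x \<bullet> v)"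
        by (rule ext) (simp add: dG_def D1_def D2_def inner_diff_left inner_diff_right inner_commute algebra_simps)
      ultimately show "(G has_derivative (\<lambda>v. dG x \<bullet> v)) (at x within T)" by simp
    qed
  qed
  define g where "g = (\<lambda>x::real^2. if norm x \<le> 1 then h x else G x)"
  define dg where "dg = (\<lambda>x::real^2. if norm x \<le> 1 then dh x else dG x)"
  have eq1: "p1 x = x" "p2 x = x" if "norm x = 1" for x
    using that by (auto simp: p1_def p2_def power2_norm_eq_inner[symmetric])
  have eq2: "x \<bullet> x = 1" if "norm x = 1" for x::"real^2"
    using that by (simp add: power2_norm_eq_inner[symmetric])
  have "W T g dg"
  proof (rule W_cong[OF WG])
    fix x assume x: "x \<in> T"
    show "g x = G x"
    proof (cases "norm x \<le> 1")
      case True then have "norm x = 1" using x by (auto simp: T_def)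
      then show ?thesis by (simp add: g_def G_def eq1)
    qed (simp add: g_def)
    show "dg x = dG x"
    proof (cases "norm x \<le> 1")
      case True then have n: "norm x = 1" using x by (auto simp: T_def)
      show ?thesis using n by (simp add: dg_def dG_def eq1[OF n] eq2[OF n] vec_eq2 algebra_simps)
    qed (simp add: dg_def)
  qed
  moreover have "W (cball 0 1) g dg"
    by (rule W_cong[OF W]) (auto simp: g_def dg_def)
  ultimately have "W (cball 0 1 \<union> T) g dg"
    using cT by (intro W_Un) auto
  moreover have "cball 0 1 \<union> T = UNIV" by (auto simp: T_def)
  ultimately show ?thesis by (intro exI[of _ g] exI[of _ dg]) (auto simp: g_def)
qed



lemma vec_nth_deriv[derivative_intros]:
  "((\<lambda>x::real^'n. x $ i) has_derivative (\<lambda>v. v $ i)) F"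
  by (rule bounded_linear_imp_has_derivative) (rule bounded_linear_vec_nth)

lemma norm_le1_iff: "norm (x::real^2) \<le> 1 \<longleftrightarrow> x$1^2 + x$2^2 \<le> 1"
proof -
  have "norm x \<le> 1 \<longleftrightarrow> norm x ^ 2 \<le> 1"
    by (metis abs_norm_cancel abs_square_le_1)
  then show ?thesis by (simp add: normsq2)
qed

definition K0 :: "(real^2) set" where "K0 = {x. norm x \<le> 1 \<and> 0 \<le> x$1 * x$2}"
definition C0 :: "(real^2) set" where "C0 = {x. norm x \<le> 1 \<and> x$1 * x$2 \<le> 0}"

definition Rf :: "2 \<Rightarrow> real^2 \<Rightarrow> real^2" where "Rf i x = x - (2 * x$i) *\<^sub>R axis i 1"
definition mu :: "real \<Rightarrow> real" where "mu s = inverse (1 + 3 * s^2)"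
definition mu' :: "real \<Rightarrow> real" where "mu' s = - 6 * s / (1 + 3 * s^2)^2"
definition Pf :: "2 \<Rightarrow> real^2 \<Rightarrow> real^2" where "Pf i x = mu (x$i) *\<^sub>R (x - (3 * x$i) *\<^sub>R axis i 1)"
definition Hf :: "2 \<Rightarrow> (real^2 \<Rightarrow> real) \<Rightarrow> real^2 \<Rightarrow> real" where
  "Hf i f x = 3 * f (Rf i x) - 2 * f (Pf i x)"
definition gH :: "2 \<Rightarrow> (real^2 \<Rightarrow> real^2) \<Rightarrow> real^2 \<Rightarrow> real^2" where
  "gH i df x = 3 *\<^sub>R (df (Rf i x) - (2 * df (Rf i x) $ i) *\<^sub>R axis i 1)
     - 2 *\<^sub>R ((mu' (x$i) * (df (Pf i x) \<bullet> (x - (3 * x$i) *\<^sub>R axis i 1))) *\<^sub>R axis i 1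
        + mu (x$i) *\<^sub>R df (Pf i x) - (3 * mu (x$i) * df (Pf i x) $ i) *\<^sub>R axis i 1)"

lemma two_cases: "(i::2) = 1 \<or> i = 2"
  using exhaust_2 by blast

lemma mu_pos: "0 < 1 + 3 * (s::real)^2" by (simp add: add_pos_nonneg)

lemma Rf_C0: "x \<in> C0 \<Longrightarrow> Rf i x \<in> K0"
  using two_cases[of i]
  by (auto simp: C0_def K0_def Rf_def norm_le1_iff mult_le_0_iff)

lemma Pf_C0: assumes "x \<in> C0" shows "Pf i x \<in> K0"
proof -
  have a: "x$1^2 + x$2^2 \<le> 1" "x$1 * x$2 \<le> 0" using assms by (auto simp: C0_def norm_le1_iff)
  have key: "(mu a)^2 * (4 * a^2 + b^2) \<le> 1" if "a^2 + b^2 \<le> 1" for a b :: real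
  proof -
    have m: "1 \<le> 1 + 3 * a^2" by simp
    have "4 * a^2 + b^2 \<le> 1 + 3 * a^2" using that by simp
    also have "\<dots> \<le> (1 + 3 * a^2)^2" using m by (intro self_le_power) auto
    finally have "4 * a^2 + b^2 \<le> (1 + 3 * a^2)^2" .
    then show ?thesis using mu_pos[of a]
      by (simp add: mu_def power_inverse field_simps)
  qed
  have p: "0 \<le> (mu a)^2 * (c * d)" if "c * d \<ge> 0" for a c d :: real
    using that by simp
  show ?thesis
  proof (cases "i = 1")
    case True
    have "(Pf i x)$1^2 + (Pf i x)$2^2 = (mu (x$1))^2 * (4 * (x$1)^2 + (x$2)^2)"
      using True by (simp add: Pf_def power2_eq_square algebra_simps)
    moreover have "(Pf i x)$1 * (Pf i x)$2 = (mu (x$1))^2 * (-2 * (x$1 * x$2))"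
      using True by (simp add: Pf_def power2_eq_square algebra_simps)
    ultimately show ?thesis using key[of "x$1" "x$2"] a p[of "-2" "x$1 * x$2" "x$1"]
      by (auto simp: K0_def norm_le1_iff add.commute mult_nonneg_nonpos2)
  next
    case False then have i: "i = 2" using two_cases by blast
    have "(Pf i x)$1^2 + (Pf i x)$2^2 = (mu (x$2))^2 * (4 * (x$2)^2 + (x$1)^2)"
      using i by (simp add: Pf_def power2_eq_square algebra_simps)
    moreover have "(Pf i x)$1 * (Pf i x)$2 = (mu (x$2))^2 * (-2 * (x$1 * x$2))"
      using i by (simp add: Pf_def power2_eq_square algebra_simps)
    ultimately show ?thesis using key[of "x$2" "x$1"] a p[of "-2" "x$1 * x$2" "x$2"]
      by (auto simp: K0_def norm_le1_iff add.commute mult_nonneg_nonpos2)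
  qed
qed

lemma Rf_deriv: "(Rf i has_derivative (\<lambda>v. v - (2 * v$i) *\<^sub>R axis i 1)) F"
  unfolding Rf_def by (auto intro!: derivative_eq_intros)

lemma Pf_deriv: "(Pf i has_derivative (\<lambda>v. (mu' (x$i) * v$i) *\<^sub>R (x - (3 * x$i) *\<^sub>R axis i 1)
    + mu (x$i) *\<^sub>R (v - (3 * v$i) *\<^sub>R axis i 1))) (at x within S)"
  unfolding Pf_def mu_def
  apply (rule has_derivative_eq_rhs)
   apply (rule derivative_eq_intros | simp add: mu_pos[THEN less_imp_neq[THEN not_sym]])+
  apply (rule ext)
  using mu_pos[of "x$i"]
  apply (simp add: mu'_def field_simps power2_eq_square)
  done

lemma Rf_cont: "continuous_on S (Rf i)"
  unfolding Rf_def by (intro continuous_intros)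

lemma Pf_cont: "continuous_on S (Pf i)"
  unfolding Pf_def mu_def
  by (intro continuous_intros) (simp add: mu_pos[THEN less_imp_neq[THEN not_sym]])

lemma H_deriv:
  assumes W: "W K0 f df" and x: "x \<in> C0"
  shows "(Hf i f has_derivative (\<lambda>v. gH i df x \<bullet> v)) (at x within C0)"
proof -
  have hd: "\<And>y. y \<in> K0 \<Longrightarrow> (f has_derivative (\<lambda>v. df y \<bullet> v)) (at y within K0)"
    using W by (auto simp: W_def)
  have RC: "Rf i ` C0 \<subseteq> K0" using Rf_C0 by blast
  have PC: "Pf i ` C0 \<subseteq> K0" using Pf_C0 by blast
  note e1 = has_derivative_in_compose2[OF hd RC x Rf_deriv]
  note e2 = has_derivative_in_compose2[OF hd PC x Pf_deriv]
  have "(Hf i f has_derivative (\<lambda>v. 3 * (df (Rf i x) \<bullet> (v - (2 * v $ i) *\<^sub>R axis i 1))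
     - 2 * (df (Pf i x) \<bullet> ((mu' (x$i) * v$i) *\<^sub>R (x - (3 * x$i) *\<^sub>R axis i 1)
    + mu (x$i) *\<^sub>R (v - (3 * v$i) *\<^sub>R axis i 1))))) (at x within C0)"
    unfolding Hf_def by (intro derivative_intros e1 e2)
  moreover have "(\<lambda>v. 3 * (df (Rf i x) \<bullet> (v - (2 * v $ i) *\<^sub>R axis i 1))
     - 2 * (df (Pf i x) \<bullet> ((mu' (x$i) * v$i) *\<^sub>R (x - (3 * x$i) *\<^sub>R axis i 1)
    + mu (x$i) *\<^sub>R (v - (3 * v$i) *\<^sub>R axis i 1)))) = (\<lambda>v. gH i df x \<bullet> v)"
    by (rule ext) (simp add: gH_def inner_diff_left inner_diff_right inner_add_left inner_add_right
        inner_axis inner_axis' algebra_simps)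
  ultimately show ?thesis by simp
qed

lemma gH_cont:
  assumes W: "W K0 f df"
  shows "continuous_on C0 (gH i df)"
proof -
  have cd: "continuous_on K0 df" using W by (simp add: W_def)
  have RC: "Rf i ` C0 \<subseteq> K0" using Rf_C0 by blast
  have PC: "Pf i ` C0 \<subseteq> K0" using Pf_C0 by blast
  have c1: "continuous_on C0 (\<lambda>x. df (Rf i x))" by (rule continuous_on_compose2[OF cd Rf_cont RC])
  have c2: "continuous_on C0 (\<lambda>x. df (Pf i x))" by (rule continuous_on_compose2[OF cd Pf_cont PC])
  show ?thesis unfolding gH_def mu_def mu'_def
    by (intro continuous_intros c1 c2) (auto simp: mu_pos[THEN less_imp_neq[THEN not_sym]])
qed

lemma axis_vals:
  assumes "x$i = 0"
  shows "Rf i x = x" "Pf i x = x" "Hf i f x = f x" "gH i df x = df x"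
  using assms by (auto simp: Rf_def Pf_def Hf_def gH_def mu_def mu'_def algebra_simps vec_eq_iff)



definition uf :: "real^2 \<Rightarrow> real" where "uf x = (x$2)^2 / (x \<bullet> x)"
definition chi :: "real^2 \<Rightarrow> real" where "chi x = 3 * (uf x)^2 - 2 * (uf x)^3"
definition du :: "real^2 \<Rightarrow> real^2" where
  "du x = (2 * x$2 / (x \<bullet> x)) *\<^sub>R axis 2 1 - (2 * (x$2)^2 / (x \<bullet> x)^2) *\<^sub>R x"
definition dchi :: "real^2 \<Rightarrow> real^2" where "dchi x = (6 * uf x - 6 * (uf x)^2) *\<^sub>R du x"

lemma uf_bounds: "0 \<le> uf x" "uf x \<le> 1"
proof -
  have d: "x \<bullet> x = (x$1)^2 + (x$2)^2" by (simp add: inner2 power2_eq_square)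
  then have a: "(x$2)^2 \<le> x \<bullet> x" by simp
  have b: "0 \<le> x \<bullet> x" by simp
  show "0 \<le> uf x" unfolding uf_def using b by simp
  show "uf x \<le> 1" unfolding uf_def using a b
    by (cases "x \<bullet> x = 0") (auto simp: divide_le_eq_1 less_le)
qed

lemma chi_bounds: "0 \<le> chi x" "chi x \<le> 1"
proof -
  let ?u = "uf x"
  have u: "0 \<le> ?u" "?u \<le> 1" by (rule uf_bounds)+
  have "chi x = ?u^2 * (3 - 2 * ?u)" by (simp add: chi_def algebra_simps power2_eq_square power3_eq_cube)
  then show "0 \<le> chi x" using u by simp
  have "1 - chi x = (1 - ?u)^2 * (1 + 2 * ?u)" by (simp add: chi_def algebra_simps power2_eq_square power3_eq_cube)
  moreover have "0 \<le> (1 - ?u)^2 * (1 + 2 * ?u)" using u by simp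
  ultimately show "chi x \<le> 1" by simp
qed

lemma uf_deriv: assumes "x \<noteq> 0" shows "(uf has_derivative (\<lambda>v. du x \<bullet> v)) (at x)"
proof -
  have xx: "x \<bullet> x \<noteq> 0" using assms by simp
  show ?thesis unfolding uf_def
    apply (rule has_derivative_eq_rhs)
     apply (rule derivative_eq_intros | simp add: xx assms)+
    apply (rule ext)
    subgoal for h using xx inner_commute[of h x]
      by (simp add: du_def inner_diff_left inner_axis' field_simps power2_eq_square)
    done
qed

lemma chi_deriv: assumes "x \<noteq> 0" shows "(chi has_derivative (\<lambda>v. dchi x \<bullet> v)) (at x)"
  unfolding chi_def
  apply (rule has_derivative_eq_rhs)
   apply (rule derivative_eq_intros uf_deriv[OF assms] | simp)+
  apply (rule ext)
  apply (simp add: dchi_def algebra_simps power2_eq_square power3_eq_cube)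
  done

lemma dchi_cont: "continuous_on (UNIV - {0}) dchi"
  unfolding dchi_def du_def uf_def
  by (intro continuous_intros) auto

lemma chi_axis1: assumes "x$1 = 0" "x \<noteq> 0" shows "chi x = 1" "dchi x = 0"
proof -
  have "x \<bullet> x = (x$2)^2" using assms by (simp add: inner2 power2_eq_square)
  moreover have "x$2 \<noteq> 0" using assms by (auto simp: vec_eq2)
  ultimately have "uf x = 1" by (simp add: uf_def)
  then show "chi x = 1" "dchi x = 0" by (auto simp: chi_def dchi_def)
qed

lemma chi_axis2: assumes "x$2 = 0" shows "chi x = 0" "dchi x = 0"
  using assms by (auto simp: chi_def dchi_def uf_def)

lemma dchi_bound: "norm (dchi x) * norm x \<le> 24"
proof (cases "x = 0")
  case True then show ?thesis by simp
next
  case False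
  let ?r = "norm x"
  have r: "0 < ?r" using False by simp
  have xx: "x \<bullet> x = ?r^2" by (simp add: power2_norm_eq_inner)
  have c2: "\<bar>x$2\<bar> \<le> ?r" by (rule component_le_norm_cart)
  have c2': "(x$2)^2 \<le> ?r^2" using c2 by (metis abs_le_square_iff abs_norm_cancel)
  have u: "0 \<le> uf x" "uf x \<le> 1" by (rule uf_bounds)+
  have s: "\<bar>6 * uf x - 6 * (uf x)^2\<bar> \<le> 6"
  proof -
    have "6 * uf x - 6 * (uf x)^2 = 6 * (uf x * (1 - uf x))" by (simp add: algebra_simps power2_eq_square)
    moreover have "0 \<le> uf x * (1 - uf x)" "uf x * (1 - uf x) \<le> 1" using u by (auto intro: mult_le_one)
    ultimately show ?thesis by simp
  qed
  have "norm (du x) \<le> norm ((2 * x$2 / (x \<bullet> x)) *\<^sub>R (axis 2 1 :: real^2)) + norm ((2 * (x$2)^2 / (x \<bullet> x)^2) *\<^sub>R x)"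
    unfolding du_def by (rule norm_triangle_ineq4)
  also have "\<dots> = 2 * \<bar>x$2\<bar> / ?r^2 + 2 * (x$2)^2 / ?r^4 * ?r"
    by (simp add: xx abs_mult flip: power_mult)
  also have "\<dots> \<le> 2 * ?r / ?r^2 + 2 * ?r^2 / ?r^4 * ?r"
    using c2 c2' r by (intro add_mono mult_right_mono divide_right_mono) auto
  also have "\<dots> = 4 / ?r" using r by (simp add: field_simps power2_eq_square power4_eq_xxxx)
  finally have dn: "norm (du x) \<le> 4 / ?r" .
  have "norm (dchi x) * ?r = \<bar>6 * uf x - 6 * (uf x)^2\<bar> * (norm (du x) * ?r)"
    by (simp add: dchi_def)
  also have "\<dots> \<le> 6 * 4"
  proof (rule mult_mono)
    show "norm (du x) * ?r \<le> 4" using dn r by (simp add: field_simps)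
  qed (use s in auto)
  finally show ?thesis by simp
qed



lemma deriv_squeeze:
  fixes F1 F2 :: "'a::real_normed_vector \<Rightarrow> real"
  assumes d1: "(F1 has_derivative L) (at x within S)" and d2: "(F2 has_derivative L) (at x within S)"
    and eq: "F1 x = F2 x" and w: "\<And>y. 0 \<le> w y" "\<And>y. w y \<le> 1"
  shows "((\<lambda>y. w y * F1 y + (1 - w y) * F2 y) has_derivative L) (at x within S)"
proof -
  have L: "bounded_linear L" using d1 by (simp add: has_derivative_def)
  show ?thesis unfolding has_derivative_within_alt2
  proof (intro conjI L allI impI)
    fix e :: real assume e: "e > 0"
    have ev: "\<forall>\<^sub>F y in at x within S. norm (F1 y - F1 x - L (y - x)) \<le> e * norm (y - x)
             \<and> norm (F2 y - F2 x - L (y - x)) \<le> e * norm (y - x)"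
      using d1 d2 e unfolding has_derivative_within_alt2 by (auto intro: eventually_conj)
    show "\<forall>\<^sub>F y in at x within S. norm (w y * F1 y + (1 - w y) * F2 y - (w x * F1 x + (1 - w x) * F2 x) - L (y - x))
          \<le> e * norm (y - x)"
      using ev
    proof (rule eventually_mono)
      fix y assume a: "norm (F1 y - F1 x - L (y - x)) \<le> e * norm (y - x)
             \<and> norm (F2 y - F2 x - L (y - x)) \<le> e * norm (y - x)"
      have id: "w y * F1 y + (1 - w y) * F2 y - (w x * F1 x + (1 - w x) * F2 x) - L (y - x)
          = w y * (F1 y - F1 x - L (y - x)) + (1 - w y) * (F2 y - F2 x - L (y - x))"
        using eq by (simp add: algebra_simps)
      have "\<bar>w y * (F1 y - F1 x - L (y - x)) + (1 - w y) * (F2 y - F2 x - L (y - x))\<bar>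
          \<le> w y * \<bar>F1 y - F1 x - L (y - x)\<bar> + (1 - w y) * \<bar>F2 y - F2 x - L (y - x)\<bar>"
        using w[of y] by (metis abs_mult abs_of_nonneg abs_triangle_ineq diff_ge_0_iff_ge)
      also have "\<dots> \<le> w y * (e * norm (y - x)) + (1 - w y) * (e * norm (y - x))"
        using a w[of y] by (intro add_mono mult_left_mono) auto
      also have "\<dots> = e * norm (y - x)" by (simp add: algebra_simps)
      finally show "norm (w y * F1 y + (1 - w y) * F2 y - (w x * F1 x + (1 - w x) * F2 x) - L (y - x))
          \<le> e * norm (y - x)" by (simp add: id)
    qed
  qed
qed

lemma cont_squeeze:
  fixes F1 F2 :: "'a::real_inner \<Rightarrow> real" and G1 G2 dw :: "'a \<Rightarrow> 'a"
  assumes g1: "(G1 \<longlongrightarrow> d) (at 0 within S)" and g2: "(G2 \<longlongrightarrow> d) (at 0 within S)"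
    and f1: "(F1 has_derivative (\<lambda>v. d \<bullet> v)) (at 0 within S)"
    and f2: "(F2 has_derivative (\<lambda>v. d \<bullet> v)) (at 0 within S)"
    and eq: "F1 0 = F2 0" and w: "\<And>y. 0 \<le> w y" "\<And>y. w y \<le> 1"
    and B: "\<And>y. norm (dw y) * norm y \<le> B"
  shows "((\<lambda>y. w y *\<^sub>R G1 y + (1 - w y) *\<^sub>R G2 y + (F1 y - F2 y) *\<^sub>R dw y) \<longlongrightarrow> d) (at 0 within S)"
  unfolding tendsto_iff
proof (intro allI impI)
  fix e :: real assume e: "e > 0"
  have B0: "0 \<le> B" using B[of 0] by simp
  define e' where "e' = e / (6 * (B + 1))"
  have e': "e' > 0" using e B0 by (simp add: e'_def)
  have e3: "e / 3 > 0" using e by simp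
  have ev1: "\<forall>\<^sub>F y in at 0 within S. dist (G1 y) d < e / 3" using g1 e3 unfolding tendsto_iff by blast
  have ev2: "\<forall>\<^sub>F y in at 0 within S. dist (G2 y) d < e / 3" using g2 e3 unfolding tendsto_iff by blast
  have ev3: "\<forall>\<^sub>F y in at 0 within S. norm (F1 y - F1 0 - d \<bullet> (y - 0)) \<le> e' * norm (y - 0)"
    using f1 e' unfolding has_derivative_within_alt2 by auto
  have ev4: "\<forall>\<^sub>F y in at 0 within S. norm (F2 y - F2 0 - d \<bullet> (y - 0)) \<le> e' * norm (y - 0)"
    using f2 e' unfolding has_derivative_within_alt2 by auto
  show "\<forall>\<^sub>F y in at 0 within S. dist (w y *\<^sub>R G1 y + (1 - w y) *\<^sub>R G2 y + (F1 y - F2 y) *\<^sub>R dw y) d < e"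
    using ev1 ev2 ev3 ev4
  proof eventually_elim
    case (elim y)
    have a3: "\<bar>F1 y - F1 0 - d \<bullet> y\<bar> \<le> e' * norm y" using elim(3) by simp
    have a4: "\<bar>F2 y - F2 0 - d \<bullet> y\<bar> \<le> e' * norm y" using elim(4) by simp
    have "F1 y - F2 y = (F1 y - F1 0 - d \<bullet> y) - (F2 y - F2 0 - d \<bullet> y)" using eq by simp
    then have "\<bar>F1 y - F2 y\<bar> \<le> \<bar>F1 y - F1 0 - d \<bullet> y\<bar> + \<bar>F2 y - F2 0 - d \<bullet> y\<bar>"
      by (metis abs_triangle_ineq4)
    then have fd: "\<bar>F1 y - F2 y\<bar> \<le> 2 * e' * norm y" using a3 a4 by linarith
    have "\<bar>F1 y - F2 y\<bar> * norm (dw y) \<le> 2 * e' * norm y * norm (dw y)"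
      using fd by (intro mult_right_mono) auto
    also have "\<dots> = 2 * e' * (norm (dw y) * norm y)" by simp
    also have "\<dots> \<le> 2 * e' * B" using B[of y] e' by (intro mult_left_mono) auto
    also have "\<dots> \<le> e / 3" using e B0 by (simp add: e'_def field_simps)
    finally have t3: "\<bar>F1 y - F2 y\<bar> * norm (dw y) \<le> e / 3" .
    have id: "w y *\<^sub>R G1 y + (1 - w y) *\<^sub>R G2 y + (F1 y - F2 y) *\<^sub>R dw y - d
       = w y *\<^sub>R (G1 y - d) + (1 - w y) *\<^sub>R (G2 y - d) + (F1 y - F2 y) *\<^sub>R dw y"
      by (simp add: algebra_simps)
    have "norm (w y *\<^sub>R (G1 y - d) + (1 - w y) *\<^sub>R (G2 y - d) + (F1 y - F2 y) *\<^sub>R dw y)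
       \<le> norm (w y *\<^sub>R (G1 y - d)) + norm ((1 - w y) *\<^sub>R (G2 y - d)) + norm ((F1 y - F2 y) *\<^sub>R dw y)"
      by (rule order_trans[OF norm_triangle_ineq add_right_mono[OF norm_triangle_ineq]])
    also have "\<dots> = w y * norm (G1 y - d) + (1 - w y) * norm (G2 y - d) + \<bar>F1 y - F2 y\<bar> * norm (dw y)"
      using w[of y] by simp
    also have "\<dots> < w y * (e / 3) + (1 - w y) * (e / 3) + e / 3 + e / 3"
    proof -
      have "w y * norm (G1 y - d) + (1 - w y) * norm (G2 y - d) \<le> w y * (e/3) + (1 - w y) * (e/3)"
        using elim(1,2) w[of y] by (intro add_mono mult_left_mono) (auto simp: dist_norm less_imp_le)
      then show ?thesis using t3 e by linarith
    qed
    also have "\<dots> = e" by (simp add: field_simps)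
    finally show ?case by (simp add: dist_norm id)
  qed
qed

definition Bl :: "(real^2 \<Rightarrow> real) \<Rightarrow> real^2 \<Rightarrow> real" where
  "Bl f x = chi x * Hf 1 f x + (1 - chi x) * Hf 2 f x"
definition dBl :: "(real^2 \<Rightarrow> real) \<Rightarrow> (real^2 \<Rightarrow> real^2) \<Rightarrow> real^2 \<Rightarrow> real^2" where
  "dBl f df x = (if x = 0 then df 0 else chi x *\<^sub>R gH 1 df x + (1 - chi x) *\<^sub>R gH 2 df x
      + (Hf 1 f x - Hf 2 f x) *\<^sub>R dchi x)"



lemma zero_C0: "0 \<in> C0" by (simp add: C0_def)

lemma blend_W:
  assumes W: "W K0 f df"
  shows "W C0 (Bl f) (dBl f df)"
  unfolding W_def
proof (intro conjI ballI)
  have hd: "\<And>i x. x \<in> C0 \<Longrightarrow> (Hf i f has_derivative (\<lambda>v. gH i df x \<bullet> v)) (at x within C0)"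
    using H_deriv[OF W] by blast
  have gc: "\<And>i. continuous_on C0 (gH i df)" using gH_cont[OF W] by blast
  have v0: "\<And>i. Hf i f 0 = f 0" "\<And>i. gH i df 0 = df 0" using axis_vals[of 0] by auto
  let ?F = "\<lambda>y. chi y *\<^sub>R gH 1 df y + (1 - chi y) *\<^sub>R gH 2 df y + (Hf 1 f y - Hf 2 f y) *\<^sub>R dchi y"
  {
    fix x assume x: "x \<in> C0"
    show "(Bl f has_derivative (\<lambda>v. dBl f df x \<bullet> v)) (at x within C0)"
    proof (cases "x = 0")
      case True
      have "((\<lambda>y. chi y * Hf 1 f y + (1 - chi y) * Hf 2 f y) has_derivative (\<lambda>v. df 0 \<bullet> v)) (at 0 within C0)"
        using hd[OF zero_C0, of 1] hd[OF zero_C0, of 2]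
        by (intro deriv_squeeze) (auto simp: v0 chi_bounds)
      then show ?thesis using True by (simp add: Bl_def[abs_def] dBl_def)
    next
      case False
      have c: "(chi has_derivative (\<lambda>v. dchi x \<bullet> v)) (at x within C0)"
        by (rule has_derivative_at_withinI[OF chi_deriv[OF False]])
      have "(Bl f has_derivative (\<lambda>v. chi x * (gH 1 df x \<bullet> v) + (dchi x \<bullet> v) * Hf 1 f x
          + ((1 - chi x) * (gH 2 df x \<bullet> v) + (0 - dchi x \<bullet> v) * Hf 2 f x))) (at x within C0)"
        unfolding Bl_def[abs_def]
        by (intro has_derivative_add has_derivative_mult has_derivative_diff c hd x has_derivative_const)
      moreover have "(\<lambda>v. chi x * (gH 1 df x \<bullet> v) + (dchi x \<bullet> v) * Hf 1 f x
          + ((1 - chi x) * (gH 2 df x \<bullet> v) + (0 - dchi x \<bullet> v) * Hf 2 f x)) = (\<lambda>v. dBl f df x \<bullet> v)"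
        using False by (auto simp: dBl_def inner_add_left algebra_simps)
      ultimately show ?thesis by simp
    qed
  }
  show "continuous_on C0 (dBl f df)"
    unfolding continuous_on_eq_continuous_within
  proof
    fix x assume x: "x \<in> C0"
    show "continuous (at x within C0) (dBl f df)"
    proof (cases "x = 0")
      case True
      have g: "\<And>i. (gH i df \<longlongrightarrow> df 0) (at 0 within C0)"
        using gc zero_C0 v0 by (metis continuous_on_def)
      have "(?F \<longlongrightarrow> df 0) (at 0 within C0)"
        by (rule cont_squeeze[where B=24, OF g[of 1] g[of 2] hd[OF zero_C0, of 1, unfolded v0(2)] hd[OF zero_C0, of 2, unfolded v0(2)]])
           (auto simp: v0 chi_bounds dchi_bound)
      then have "(dBl f df \<longlongrightarrow> df 0) (at 0 within C0)"
        by (rule Lim_transform_within[where d=1]) (auto simp: dBl_def)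
      then show ?thesis using True by (simp add: continuous_within dBl_def)
    next
      case False
      have "continuous (at x within C0) chi"
        by (rule continuous_at_imp_continuous_at_within[OF has_derivative_continuous[OF chi_deriv[OF False]]])
      moreover have "continuous (at x within C0) dchi"
      proof -
        have "continuous (at x) dchi"
        proof -
          have o: "open (UNIV - {0::real^2})" by (simp add: open_Diff)
          show ?thesis using dchi_cont False continuous_on_eq_continuous_at[OF o] by blast
        qed
        then show ?thesis by (rule continuous_at_imp_continuous_at_within)
      qed
      moreover have "\<And>i. continuous (at x within C0) (gH i df)"
        using gc x by (meson continuous_on_eq_continuous_within)
      moreover have "\<And>i. continuous (at x within C0) (Hf i f)"
        using hd x has_derivative_continuous by blast
      ultimately have "continuous (at x within C0) ?F"
        by (intro continuous_intros) auto
      then show ?thesis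
        by (rule continuous_transform_within[where \<delta> = "norm x"]) (use False x in \<open>auto simp: dBl_def dist_norm\<close>)
    qed
  qed
qed



lemma closed_K0: "closed K0"
  unfolding K0_def by (intro closed_Collect_conj closed_Collect_le continuous_intros)

lemma closed_C0: "closed C0"
  unfolding C0_def by (intro closed_Collect_conj closed_Collect_le continuous_intros)

lemma axis_glue:
  assumes "x$1 * x$2 = 0"
  shows "Bl f x = f x \<and> dBl f df x = df x"
proof (cases "x = 0")
  case True
  then show ?thesis using axis_vals[of 0] by (auto simp: Bl_def dBl_def algebra_simps)
next
  case False
  show ?thesis
  proof (cases "x$1 = 0")
    case True
    then show ?thesis using axis_vals[of x 1] chi_axis1[OF True False] False by (auto simp: Bl_def dBl_def)
  next
    case F2: False
    then have a: "x$2 = 0" using assms by simp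
    then show ?thesis using axis_vals[of x 2] chi_axis2[OF a] False by (auto simp: Bl_def dBl_def)
  qed
qed

lemma fill_W:
  assumes W: "W K0 f df"
  shows "\<exists>h dh. W (cball 0 1) h dh \<and> (\<forall>x\<in>K0. h x = f x)"
proof -
  define h where "h = (\<lambda>x::real^2. if 0 \<le> x$1 * x$2 then f x else Bl f x)"
  define dh where "dh = (\<lambda>x::real^2. if 0 \<le> x$1 * x$2 then df x else dBl f df x)"
  have "W K0 h dh" by (rule W_cong[OF W]) (auto simp: h_def dh_def K0_def)
  moreover have "W C0 h dh"
    by (rule W_cong[OF blend_W[OF W]]) (auto simp: h_def dh_def C0_def axis_glue)
  ultimately have "W (K0 \<union> C0) h dh" using closed_K0 closed_C0 by (intro W_Un)
  moreover have "K0 \<union> C0 = cball 0 1" by (auto simp: K0_def C0_def)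
  ultimately show ?thesis by (auto simp: h_def K0_def)
qed

lemma C1_on_ext_K0:
  assumes "C1_on K0 f" shows "C1_ext K0 f"
proof -
  obtain df where W: "W K0 f df" using assms by (auto simp: C1_on_W)
  obtain h dh where h: "W (cball 0 1) h dh" "\<forall>x\<in>K0. h x = f x" using fill_W[OF W] by blast
  obtain g dg where g: "W UNIV g dg" "\<forall>x\<in>cball 0 1. g x = h x" using kelvin_ext[OF h(1)] by blast
  have "K0 \<subseteq> cball 0 1" by (auto simp: K0_def)
  then show ?thesis using g h by (intro W_UNIV_ext[of g dg]) auto
qed



lemma convex_piece_deriv:
  fixes f :: "real^2 \<Rightarrow> real"
  assumes cA: "convex A" and clA: "closed A" and iA: "interior A \<noteq> {}"
    and der: "\<And>z. z \<in> interior A \<Longrightarrow> (f has_derivative (\<lambda>h. df z \<bullet> h)) (at z)"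
    and cf: "continuous_on A f" and cdf: "continuous_on A df" and x: "x \<in> A"
  shows "(f has_derivative (\<lambda>h. df x \<bullet> h)) (at x within A)"
  unfolding has_derivative_within_alt
proof (intro conjI allI impI bounded_linear_inner_right)
  fix e :: real assume e: "e > 0"
  obtain d where d: "d > 0" "\<And>z. z \<in> A \<Longrightarrow> dist z x < d \<Longrightarrow> dist (df z) (df x) < e"
    using cdf x e unfolding continuous_on_iff by blast
  define S where "S = interior A \<inter> ball x d"
  have cS: "convex S" unfolding S_def by (intro convex_Int convex_interior cA convex_ball)
  define \<phi> where "\<phi> = (\<lambda>z. f z - df x \<bullet> z)"
  have bnd: "\<bar>\<phi> y - \<phi> z\<bar> \<le> e * norm (y - z)" if "y \<in> S" "z \<in> S" for y z
  proof -
    have "norm (\<phi> y - \<phi> z) \<le> e * norm (y - z)"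
    proof (rule differentiable_bound[OF cS _ _ that])
      fix w assume w: "w \<in> S"
      have "(f has_derivative (\<lambda>h. df w \<bullet> h)) (at w within S)"
        using der w by (auto simp: S_def intro: has_derivative_at_withinI)
      then show "(\<phi> has_derivative (\<lambda>h. (df w - df x) \<bullet> h)) (at w within S)"
        unfolding \<phi>_def by (auto intro!: derivative_eq_intros simp: inner_diff_left)
      show "onorm (\<lambda>h. (df w - df x) \<bullet> h) \<le> e"
      proof (rule onorm_le)
        fix h :: "real^2"
        have wA: "w \<in> A" "dist w x < d" using w interior_subset by (auto simp: S_def dist_commute)
        have "norm (df w - df x) \<le> e"
          using d(2)[OF wA] by (simp add: dist_norm)
        then have "norm (df w - df x) * norm h \<le> e * norm h" by (rule mult_right_mono) simp
        then show "norm ((df w - df x) \<bullet> h) \<le> e * norm h"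
          using Cauchy_Schwarz_ineq2[of "df w - df x" h] by simp
      qed
    qed
    then show ?thesis by simp
  qed
  have sub: "A \<inter> ball x d \<subseteq> closure S"
  proof -
    have xc: "x \<in> closure (interior A)" using convex_closure_interior[OF cA iA] clA x by simp
    then obtain z where z: "z \<in> interior A" "dist z x < d" using d(1) closure_approachable by blast
    have ie: "interior (A \<inter> ball x d) = S" by (simp add: S_def interior_open)
    have ne: "interior (A \<inter> ball x d) \<noteq> {}" unfolding ie using z by (auto simp: S_def dist_commute)
    have cv: "convex (A \<inter> ball x d)" by (intro convex_Int cA convex_ball)
    have "closure S = closure (A \<inter> ball x d)"
      using convex_closure_interior[OF cv ne] unfolding ie .
    then show ?thesis by (simp add: closure_subset)
  qed
  have clS: "closure S \<subseteq> A" using clA by (intro closure_minimal) (auto simp: S_def interior_subset[THEN subsetD])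
  have cont: "continuous_on (closure (S \<times> S)) (\<lambda>p. \<bar>\<phi> (fst p) - \<phi> (snd p)\<bar> - e * norm (fst p - snd p))"
  proof -
    have cph: "continuous_on A \<phi>" unfolding \<phi>_def by (intro continuous_intros cf)
    have "continuous_on (A \<times> A) (\<lambda>p. \<phi> (fst p))" by (rule continuous_on_compose2[OF cph continuous_on_fst]) auto
    moreover have "continuous_on (A \<times> A) (\<lambda>p. \<phi> (snd p))" by (rule continuous_on_compose2[OF cph continuous_on_snd]) auto
    ultimately have "continuous_on (A \<times> A) (\<lambda>p. \<bar>\<phi> (fst p) - \<phi> (snd p)\<bar> - e * norm (fst p - snd p))"
      by (intro continuous_intros)
    moreover have "closure (S \<times> S) \<subseteq> A \<times> A" using clS unfolding closure_Times by (rule Sigma_mono) (use clS in auto)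
    ultimately show ?thesis by (rule continuous_on_subset)
  qed
  show "\<exists>d>0. \<forall>y\<in>A. norm (y - x) < d \<longrightarrow> norm (f y - f x - df x \<bullet> (y - x)) \<le> e * norm (y - x)"
  proof (intro exI[of _ d] conjI ballI impI d(1))
    fix y assume y: "y \<in> A" "norm (y - x) < d"
    have yb: "y \<in> ball x d" using y(2) by (simp add: dist_norm norm_minus_commute)
    have xb: "x \<in> ball x d" using d(1) by simp
    have "(y, x) \<in> closure (S \<times> S)" unfolding closure_Times
      using sub y(1) x yb xb by blast
    then have "(\<lambda>p. \<bar>\<phi> (fst p) - \<phi> (snd p)\<bar> - e * norm (fst p - snd p)) (y, x) \<le> 0"
      by (rule continuous_le_on_closure[OF cont]) (use bnd in auto)
    then show "norm (f y - f x - df x \<bullet> (y - x)) \<le> e * norm (y - x)"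
      by (simp add: \<phi>_def inner_diff_right algebra_simps)
  qed
qed



definition Ap :: "(real^2) set" where "Ap = {x. norm x \<le> 1 \<and> 0 \<le> x$1 \<and> 0 \<le> x$2}"
definition Bp :: "(real^2) set" where "Bp = {x. norm x \<le> 1 \<and> x$1 \<le> 0 \<and> x$2 \<le> 0}"
definition cpt :: "real^2" where "cpt = (1/4) *\<^sub>R (axis 1 1 + axis 2 1)"

lemma K0_AB: "K0 = Ap \<union> Bp"
  by (auto simp: K0_def Ap_def Bp_def zero_le_mult_iff)

lemma closed_Ap: "closed Ap" unfolding Ap_def
  by (intro closed_Collect_conj closed_Collect_le continuous_intros)
lemma closed_Bp: "closed Bp" unfolding Bp_def
  by (intro closed_Collect_conj closed_Collect_le continuous_intros)

lemma convex_ge: "convex {x::real^2. 0 \<le> x$i}"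
  unfolding convex_def by auto
lemma convex_le: "convex {x::real^2. x$i \<le> 0}"
  unfolding convex_def by (auto intro: add_nonpos_nonpos mult_nonneg_nonpos)

lemma convex_Ap: "convex Ap"
proof -
  have "Ap = cball 0 1 \<inter> {x. 0 \<le> x$1} \<inter> {x. 0 \<le> x$2}" by (auto simp: Ap_def)
  moreover have "convex (cball (0::real^2) 1 \<inter> {x. 0 \<le> x$1} \<inter> {x. 0 \<le> x$2})"
    by (intro convex_Int convex_ge convex_cball)
  ultimately show ?thesis by simp
qed
lemma convex_Bp: "convex Bp"
proof -
  have "Bp = cball 0 1 \<inter> {x. x$1 \<le> 0} \<inter> {x. x$2 \<le> 0}" by (auto simp: Bp_def)
  moreover have "convex (cball (0::real^2) 1 \<inter> {x. x$1 \<le> 0} \<inter> {x. x$2 \<le> 0})"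
    by (intro convex_Int convex_le convex_cball)
  ultimately show ?thesis by simp
qed

lemma norm_cpt: "norm cpt \<le> 1/2"
proof -
  have "norm cpt ^ 2 = cpt$1^2 + cpt$2^2" by (rule normsq2)
  also have "\<dots> = 1/8" by (simp add: cpt_def power2_eq_square)
  finally have "norm cpt ^ 2 = 1/8" .
  then have h: "norm cpt ^ 2 \<le> (1/2)^2" by (simp add: power2_eq_square)
  show ?thesis using power2_le_imp_le[OF h] by simp
qed

lemma ball_Ap: "ball cpt (1/8) \<subseteq> Ap"
proof
  fix y assume y: "y \<in> ball cpt (1/8)"
  then have n: "norm (y - cpt) < 1/8" by (simp add: dist_norm norm_minus_commute)
  have c1: "\<bar>(y - cpt)$1\<bar> < 1/8" "\<bar>(y - cpt)$2\<bar> < 1/8"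
    using component_le_norm_cart[of "y - cpt"] n by (meson le_less_trans)+
  have "norm y \<le> norm cpt + norm (y - cpt)" by (metis norm_triangle_sub add.commute)
  then have "norm y \<le> 1" using n norm_cpt by linarith
  moreover have e1: "(y - cpt)$1 = y$1 - 1/4" "(y - cpt)$2 = y$2 - 1/4" by (simp_all add: cpt_def)
  have "0 \<le> y$1" using c1(1) unfolding e1(1) abs_less_iff by linarith
  moreover have "0 \<le> y$2" using c1(2) unfolding e1(2) abs_less_iff by linarith
  ultimately show "y \<in> Ap" by (simp add: Ap_def)
qed

lemma ball_Bp: "ball (-cpt) (1/8) \<subseteq> Bp"
proof
  fix y assume y: "y \<in> ball (-cpt) (1/8)"
  then have n: "norm (y + cpt) < 1/8" by (simp add: dist_norm norm_minus_commute add.commute)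
  have c1: "\<bar>(y + cpt)$1\<bar> < 1/8" "\<bar>(y + cpt)$2\<bar> < 1/8"
    using component_le_norm_cart[of "y + cpt"] n by (meson le_less_trans)+
  have "norm y \<le> norm cpt + norm (y + cpt)" using norm_triangle_ineq4[of "y + cpt" cpt] by simp
  then have "norm y \<le> 1" using n norm_cpt by linarith
  moreover have e1: "(y + cpt)$1 = y$1 + 1/4" "(y + cpt)$2 = y$2 + 1/4" by (simp_all add: cpt_def)
  have "y$1 \<le> 0" using c1(1) unfolding e1(1) abs_less_iff by linarith
  moreover have "y$2 \<le> 0" using c1(2) unfolding e1(2) abs_less_iff by linarith
  ultimately show "y \<in> Bp" by (simp add: Bp_def)
qed

lemma cpt_int: "cpt \<in> interior Ap" "-cpt \<in> interior Bp"
  using ball_Ap ball_Bp by (auto intro: interior_maximal[OF _ open_ball, THEN subsetD])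

lemma int_K0: "interior Ap \<subseteq> interior K0" "interior Bp \<subseteq> interior K0"
  by (auto simp: K0_AB intro: interior_mono[THEN subsetD])

lemma C1_int_on: "C1_int K0 f \<longleftrightarrow> C1_on K0 f"
proof
  assume "C1_int K0 f"
  then obtain df where der: "\<And>x. x \<in> interior K0 \<Longrightarrow> (f has_derivative (\<lambda>h. df x \<bullet> h)) (at x)"
    and cf: "continuous_on K0 f" and cdf: "continuous_on K0 df"
    unfolding C1_int_def by blast
  have dA: "(f has_derivative (\<lambda>h. df x \<bullet> h)) (at x within Ap)" if "x \<in> Ap" for x
  proof (rule convex_piece_deriv[OF convex_Ap closed_Ap _ _ _ _ that])
    show "interior Ap \<noteq> {}" using cpt_int by auto
    show "\<And>z. z \<in> interior Ap \<Longrightarrow> (f has_derivative (\<lambda>h. df z \<bullet> h)) (at z)" using der int_K0 by auto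
    show "continuous_on Ap f" using cf by (rule continuous_on_subset) (auto simp: K0_AB)
    show "continuous_on Ap df" using cdf by (rule continuous_on_subset) (auto simp: K0_AB)
  qed
  have dB: "(f has_derivative (\<lambda>h. df x \<bullet> h)) (at x within Bp)" if "x \<in> Bp" for x
  proof (rule convex_piece_deriv[OF convex_Bp closed_Bp _ _ _ _ that])
    show "interior Bp \<noteq> {}" using cpt_int by auto
    show "\<And>z. z \<in> interior Bp \<Longrightarrow> (f has_derivative (\<lambda>h. df z \<bullet> h)) (at z)" using der int_K0 by auto
    show "continuous_on Bp f" using cf by (rule continuous_on_subset) (auto simp: K0_AB)
    show "continuous_on Bp df" using cdf by (rule continuous_on_subset) (auto simp: K0_AB)
  qed
  have "W K0 f df" unfolding W_def
  proof (intro conjI cdf ballI)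
    fix x assume "x \<in> K0"
    then show "(f has_derivative (\<lambda>h. df x \<bullet> h)) (at x within K0)"
      unfolding K0_AB using closed_Ap closed_Bp dA dB
      by (intro deriv_Un bounded_linear_inner_right) auto
  qed
  then show "C1_on K0 f" by (auto simp: C1_on_W)
next
  assume "C1_on K0 f"
  then obtain df where W: "W K0 f df" by (auto simp: C1_on_W)
  have d: "\<And>x. x \<in> K0 \<Longrightarrow> (f has_derivative (\<lambda>h. df x \<bullet> h)) (at x within K0)"
    using W by (auto simp: W_def)
  show "C1_int K0 f" unfolding C1_int_def
  proof (intro exI[of _ df] conjI ballI)
    fix x assume x: "x \<in> interior K0"
    then show "(f has_derivative (\<lambda>h. df x \<bullet> h)) (at x)"
      using d[of x] interior_subset at_within_interior[OF x] by auto
  next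
    show "continuous_on K0 f" using d by (rule has_derivative_continuous_on)
    show "continuous_on K0 df" using W by (simp add: W_def)
  qed
qed

lemma zero_not_int: "0 \<notin> interior K0"
proof
  assume "0 \<in> interior K0"
  then obtain e where e: "e > 0" "ball 0 e \<subseteq> K0" by (meson mem_interior)
  define p :: "real^2" where "p = (e/4) *\<^sub>R (axis 1 1 - axis 2 1)"
  have "norm p ^ 2 = p$1^2 + p$2^2" by (rule normsq2)
  also have "\<dots> = e^2 / 8" by (simp add: p_def power2_eq_square)
  also have "\<dots> < e^2" using e by simp
  finally have "norm p < e" using power2_less_imp_less e by fastforce
  then have "p \<in> K0" using e by (auto simp: dist_norm)
  moreover have "p$1 * p$2 < 0" using e by (simp add: p_def)
  ultimately show False by (simp add: K0_def)
qed

lemma not_whitney: "\<not> whitney_regular (interior K0)"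
proof
  assume "whitney_regular (interior K0)"
  then obtain C where C: "\<forall>x\<in>interior K0. \<forall>y\<in>interior K0. \<exists>g. rectifiable_path g \<and>
      path_image g \<subseteq> interior K0 \<and> pathstart g = x \<and> pathfinish g = y \<and>
      path_length g \<le> C * dist x y"
    unfolding whitney_regular_def by blast
  have ci: "cpt \<in> interior K0" "-cpt \<in> interior K0" using cpt_int int_K0 by auto
  obtain g where g: "rectifiable_path g" "path_image g \<subseteq> interior K0"
    "pathstart g = cpt" "pathfinish g = -cpt"
    using C ci by blast
  have cg: "continuous_on {0..1} g" using g(1) by (simp add: rectifiable_path_def path_def)
  define \<phi> where "\<phi> = (\<lambda>t. (g t)$1 + (g t)$2)"
  have cphi: "continuous_on {0..1} \<phi>" unfolding \<phi>_def by (intro continuous_intros cg)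
  have "\<phi> 1 \<le> 0" "0 \<le> \<phi> 0" using g(3,4) by (auto simp: \<phi>_def pathstart_def pathfinish_def cpt_def)
  then obtain t where t: "0 \<le> t" "t \<le> 1" "\<phi> t = 0" using IVT2'[of \<phi> 1 0 0, OF _ _ _ cphi] by auto
  have gt: "g t \<in> interior K0" using g(2) t by (auto simp: path_image_def)
  then have "g t \<in> K0" using interior_subset by blast
  then have "(g t)$1 * (g t)$2 \<ge> 0" by (simp add: K0_def)
  moreover have "(g t)$2 = - (g t)$1" using t(3) by (simp add: \<phi>_def)
  ultimately have "(g t)$1 = 0" "(g t)$2 = 0" by (auto simp: mult_le_0_iff)
  then have "g t = 0" by (simp add: vec_eq2)
  then show False using gt zero_not_int by simp
qed

theorem mainTheorem15:
  shows "\<exists>K :: (real^2) set. topologically_regular K \<and> compact K \<and> connected K \<and>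
           \<not> whitney_regular (interior K) \<and>
           (\<forall>f. C1_int K f \<longleftrightarrow> C1_on K f) \<and> (\<forall>f. C1_on K f \<longleftrightarrow> C1_ext K f)"
proof (intro exI[of _ K0] conjI allI)
  show "topologically_regular K0" unfolding topologically_regular_def
  proof
    show "closure (interior K0) \<subseteq> K0" by (rule closure_minimal[OF interior_subset closed_K0])
    have nA: "interior Ap \<noteq> {}" and nB: "interior Bp \<noteq> {}" using cpt_int by auto
    have "Ap = closure (interior Ap)"
      using convex_closure_interior[OF convex_Ap nA] closure_closed[OF closed_Ap] by simp
    also have "\<dots> \<subseteq> closure (interior K0)" by (rule closure_mono[OF int_K0(1)])
    finally have "Ap \<subseteq> closure (interior K0)" .
    moreover have "Bp = closure (interior Bp)"
      using convex_closure_interior[OF convex_Bp nB] closure_closed[OF closed_Bp] by simp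
    then have "Bp \<subseteq> closure (interior K0)" using closure_mono[OF int_K0(2)] by simp
    ultimately show "K0 \<subseteq> closure (interior K0)" by (simp add: K0_AB)
  qed
  have "K0 \<subseteq> cball 0 1" by (auto simp: K0_def)
  then have "bounded K0" by (rule bounded_subset[OF bounded_cball])
  then show "compact K0" unfolding compact_eq_bounded_closed using closed_K0 by simp
  show "connected K0" unfolding K0_AB
  proof (rule connected_Un)
    show "connected Ap" by (rule convex_connected[OF convex_Ap])
    show "connected Bp" by (rule convex_connected[OF convex_Bp])
    have "0 \<in> Ap \<inter> Bp" by (simp add: Ap_def Bp_def)
    then show "Ap \<inter> Bp \<noteq> {}" by blast
  qed
  show "\<not> whitney_regular (interior K0)" by (rule not_whitney)
  fix f
  show "C1_int K0 f \<longleftrightarrow> C1_on K0 f" by (rule C1_int_on)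
  show "C1_on K0 f \<longleftrightarrow> C1_ext K0 f" using C1_on_ext_K0 ext_W by blast
qed


end
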